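(* Consider $n$ bosonic modes with drift matrix $A$ (satisfying $A+A^{\sf T}<0$) and Gaussian white noise with diffusion matrix $D$, subject to continuous weak general-dyne measurement of the environment and linear (Markovian) feedback driving $\hat H_f=-\hat{\mathbf R}^{\sf T}\Omega B\,\mathbf y(t)$, where $\mathbf y(t)$ is the measured current and $B$ is any real matrix. Let $\sigma$ be the (unconditional) steady-state covariance matrix achievable in this way, and let $\lambda^{\uparrow}_1$ be its smallest eigenvalue. Let $\alpha^{\uparrow}_1$ be the smallest eigenvalue of $-(A+A^{\sf T})$ and $\delta^{\downarrow}_1$ the largest eigenvalue of $D$. Then $$\lambda^{\uparrow}_1\ge\frac{\alpha^{\uparrow}_1}{\delta^{\downarrow}_1}.$$
   Context: Setting: $n$ bosonic modes with canonical operators $\hat{\mathbf R}=(\hat x_1,\hat p_1,\dots,\hat x_n,\hat p_n)^{\sf T}$, $[\hat R_j,\hat R_k]=i\Omega_{jk}$, $\Omega=\bigoplus_{j=1}^n\begin{pmatrix}0&1\\-1&0\end{pmatrix}$. The covariance matrix (CM) of a state $\varrho$ is $\sigma_{jk}=\mathrm{Tr}(\{\hat R_j,\hat R_k\}\varrho)-2\mathrm{Tr}(\hat R_j\varrho)\mathrm{Tr}(\hat R_k\varrho)$; physical CMs satisfy $\sigma+i\Omega\ge0$. The free dynamics is the Lindblad master equation $\dot\varrho=-i[\hat H,\varrho]+\sum_{j=1}^L\mathcal D[\hat c_j]\varrho$, with $\hat H=\frac12\hat{\mathbf R}^{\sf T}H\hat{\mathbf R}$ ($H$ real symmetric), $\hat{\mathbf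 c}=\widetilde C\hat{\mathbf R}$ ($\widetilde C$ complex $L\times2n$), $\mathcal D[O]\varrho=O\varrho O^\dagger-\frac12(O^\dagger O\varrho+\varrho O^\dagger O)$; drift matrix $A=\Omega(H+\mathrm{Im}[\widetilde C^\dagger\widetilde C])$, diffusion matrix $D=2\Omega\,\mathrm{Re}[\widetilde C^\dagger\widetilde C]\Omega^{\sf T}$. A general-dyne measurement is any continuous diffusive Gaussian monitoring of the environment (unravelling of the master equation, described by a stochastic master equation); under it the conditional state is Gaussian with stochastic first moments and deterministic conditional CM $\sigma_c$, and a CM $\sigma_c$ arises as a stabilising steady-state conditional CM for some unravelling iff $\sigma_c+i\Omega\ge0$ and $A\sigma_c+\sigma_cA^{\sf T}+D\ge0$. The unconditional state is the average over measurement outcomes of the conditional states (with feedback included in the dynamics). *)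

theory Defs
  imports "HOL-Analysis.Analysis"
begin

text \<open>Phase-space indices for n modes: (j, False) is x_j, (j, True) is p_j.
  The ordering of the basis is irrelevant for eigenvalue statements.\<close>

type_synonym 'n pidx = "'n \<times> bool"

definition Omega :: "real^('n::finite pidx)^('n pidx)" where
  "Omega = (\<chi> r s. if fst r = fst s \<and> \<not> snd r \<and> snd s then 1
                    else if fst r = fst s \<and> snd r \<and> \<not> snd s then -1 else 0)"

definition CdagC :: "complex^('n::finite pidx)^('l::finite) \<Rightarrow> complex^('n pidx)^('n pidx)" where
  "CdagC C = (\<chi> i j. \<Sum>l\<in>UNIV. cnj (C $ l $ i) * C $ l $ j)"

definition drift :: "real^('n::finite pidx)^('n pidx) \<Rightarrow> complex^('n pidx)^('l::finite)
                     \<Rightarrow> real^('n pidx)^('n pidx)" where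
  "drift H C = Omega ** (H + (\<chi> i j. Im (CdagC C $ i $ j)))"

definition diffusion :: "complex^('n::finite pidx)^('l::finite) \<Rightarrow> real^('n pidx)^('n pidx)" where
  "diffusion C = 2 *\<^sub>R (Omega ** (\<chi> i j. Re (CdagC C $ i $ j)) ** transpose Omega)"

definition psd :: "real^'m^'m \<Rightarrow> bool" where
  "psd M \<longleftrightarrow> (\<forall>v. 0 \<le> v \<bullet> (M *v v))"

definition negdef :: "real^'m^'m \<Rightarrow> bool" where
  "negdef M \<longleftrightarrow> (\<forall>v. v \<noteq> 0 \<longrightarrow> v \<bullet> (M *v v) < 0)"

definition cpsd :: "complex^'m^'m \<Rightarrow> bool" where
  "cpsd M \<longleftrightarrow> (\<forall>z :: complex^'m.
      let q = (\<Sum>i\<in>UNIV. \<Sum>j\<in>UNIV. cnj (z $ i) * M $ i $ j * z $ j) in Im q = 0 \<and> 0 \<le> Re q)"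

definition plus_iOmega :: "real^('n::finite pidx)^('n pidx) \<Rightarrow> complex^('n pidx)^('n pidx)" where
  "plus_iOmega S = (\<chi> i j. complex_of_real (S $ i $ j) + \<i> * complex_of_real (Omega $ i $ j))"

text \<open>Stabilising steady-state conditional CMs attainable by some general-dyne unravelling
  (characterisation given in the setting).\<close>
definition conditional_cm :: "real^('n::finite pidx)^('n pidx) \<Rightarrow> real^('n pidx)^('n pidx)
                              \<Rightarrow> real^('n pidx)^('n pidx) \<Rightarrow> bool" where
  "conditional_cm A D Sc \<longleftrightarrow> transpose Sc = Sc \<and> cpsd (plus_iOmega Sc)
      \<and> psd (A ** Sc + Sc ** transpose A + D)"

definition achievable_cm :: "real^('n::finite pidx)^('n pidx) \<Rightarrow> real^('n pidx)^('n pidx)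
                              \<Rightarrow> real^('n pidx)^('n pidx) \<Rightarrow> bool" where
  "achievable_cm A D S \<longleftrightarrow> (\<exists>Sc M. conditional_cm A D Sc \<and> transpose M = M \<and> psd M
      \<and> S = Sc + M)"

definition is_eigenvalue :: "real^'m^'m \<Rightarrow> real \<Rightarrow> bool" where
  "is_eigenvalue M c \<longleftrightarrow> (\<exists>v. v \<noteq> 0 \<and> M *v v = c *\<^sub>R v)"

definition min_eig :: "real^'m^'m \<Rightarrow> real" where
  "min_eig M = Min {c. is_eigenvalue M c}"

definition max_eig :: "real^'m^'m \<Rightarrow> real" where
  "max_eig M = Max {c. is_eigenvalue M c}"

end

theory Submission
  imports Defs
begin

lemma dot_sym: "x \<bullet> ((M::real^'m^'m) *v y) = (transpose M *v x) \<bullet> y"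
  by (simp add: dot_lmul_matrix)

lemma sym_dot: "transpose M = M \<Longrightarrow> x \<bullet> ((M::real^'m^'m) *v y) = y \<bullet> (M *v x)"
  by (metis dot_sym inner_commute)

lemma rayleigh_max_eigvec:
  fixes M :: "real^'m^'m"
  assumes sym: "transpose M = M"
    and le: "\<And>x. x \<bullet> (M *v x) \<le> \<mu> * (x \<bullet> x)"
    and eq: "u \<bullet> (M *v u) = \<mu> * (u \<bullet> u)"
  shows "M *v u = \<mu> *\<^sub>R u"
proof -
  define y where "y = \<mu> *\<^sub>R u - M *v u"
  define c where "c = y \<bullet> y"
  define d where "d = \<mu> * (y \<bullet> y) - y \<bullet> (M *v y)"
  have d0: "d \<ge> 0" using le[of y] by (simp add: d_def)
  have c_eq: "c = \<mu> * (y \<bullet> u) - y \<bullet> (M *v u)"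
  proof -
    have "c = y \<bullet> (\<mu> *\<^sub>R u - M *v u)" by (simp add: c_def y_def[symmetric])
    thus ?thesis by (simp add: inner_diff_right)
  qed
  have key: "0 \<le> 2 * t * c + t^2 * d" for t :: real
  proof -
    have symu: "u \<bullet> (M *v y) = y \<bullet> (M *v u)" by (rule sym_dot[OF sym])
    have e1: "(u + t *\<^sub>R y) \<bullet> (M *v (u + t *\<^sub>R y)) = u \<bullet> (M *v u) + 2 * t * (y \<bullet> (M *v u)) + t^2 * (y \<bullet> (M *v y))"
      by (simp add: matrix_vector_mult_add_rdistrib matrix_vector_mult_scaleR inner_add_left inner_add_right symu power2_eq_square algebra_simps)
    have e2: "(u + t *\<^sub>R y) \<bullet> (u + t *\<^sub>R y) = u \<bullet> u + 2 * t * (y \<bullet> u) + t^2 * (y \<bullet> y)"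
      by (simp add: inner_add_left inner_add_right inner_commute power2_eq_square algebra_simps)
    have "(u + t *\<^sub>R y) \<bullet> (M *v (u + t *\<^sub>R y)) \<le> \<mu> * ((u + t *\<^sub>R y) \<bullet> (u + t *\<^sub>R y))" by (rule le)
    hence h: "0 \<le> \<mu> * (u \<bullet> u + 2 * t * (y \<bullet> u) + t^2 * (y \<bullet> y)) - (u \<bullet> (M *v u) + 2 * t * (y \<bullet> (M *v u)) + t^2 * (y \<bullet> (M *v y)))"
      unfolding e1 e2 by simp
    have "\<mu> * (u \<bullet> u + 2 * t * (y \<bullet> u) + t^2 * (y \<bullet> y)) - (u \<bullet> (M *v u) + 2 * t * (y \<bullet> (M *v u)) + t^2 * (y \<bullet> (M *v y))) = 2 * t * c + t^2 * d"
      unfolding c_eq d_def eq by (simp add: algebra_simps)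
    with h show ?thesis by simp
  qed
  have "c = 0"
  proof -
    have dp: "d + 1 \<noteq> 0" using d0 by simp
    define s where "s = - c / (d+1)"
    have cs: "c = - s * (d+1)" using dp by (simp add: s_def)
    have k: "0 \<le> 2 * s * c + s^2 * d" by (rule key)
    have "2 * s * c + s^2 * d = - (s^2 * (d+2))" unfolding cs by (simp add: algebra_simps power2_eq_square)
    with k have "s^2 * (d+2) \<le> 0" by simp
    hence "s^2 \<le> 0" using d0 by (simp add: mult_le_0_iff)
    hence "s = 0" by simp
    thus ?thesis using cs by simp
  qed
  hence "y = 0" by (simp add: c_def)
  thus ?thesis by (simp add: y_def)
qed

lemma transpose_add': "transpose (A + B) = transpose A + transpose (B::real^'m^'n)"
  by (simp add: transpose_def vec_eq_iff)
lemma transpose_neg': "transpose (- A) = - transpose (A::real^'m^'n)"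
  by (simp add: transpose_def vec_eq_iff)

lemma rayleigh_max_exists:
  fixes M :: "real^'m^'m"
  assumes sym: "transpose M = M"
  shows "\<exists>u \<mu>. u \<bullet> u = 1 \<and> M *v u = \<mu> *\<^sub>R u \<and> (\<forall>x. x \<bullet> (M *v x) \<le> \<mu> * (x \<bullet> x))"
proof -
  let ?f = "\<lambda>x. x \<bullet> (M *v x)"
  have cont: "continuous_on (sphere 0 1) ?f"
    by (intro continuous_intros linear_continuous_on) (simp add: bounded_linear_def)
  have "compact (sphere (0::real^'m) 1)" by simp
  moreover have "sphere (0::real^'m) 1 \<noteq> {}" by simp
  ultimately obtain u where u: "u \<in> sphere 0 1" and umax: "\<forall>y\<in>sphere 0 1. ?f y \<le> ?f u"
    using continuous_attains_sup[OF _ _ cont] by blast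
  define \<mu> where "\<mu> = ?f u"
  have nu: "norm u = 1" using u by simp
  have uu: "u \<bullet> u = 1" using nu by (simp add: norm_eq_sqrt_inner)
  have le: "x \<bullet> (M *v x) \<le> \<mu> * (x \<bullet> x)" for x
  proof (cases "x = 0")
    case True thus ?thesis by simp
  next
    case False
    define y where "y = (1 / norm x) *\<^sub>R x"
    have "y \<in> sphere 0 1" using False by (simp add: y_def)
    hence "?f y \<le> \<mu>" using umax by (simp add: \<mu>_def)
    moreover have "?f y = ?f x / (norm x)^2"
      by (simp add: y_def matrix_vector_mult_scaleR power2_eq_square)
    moreover have "x \<bullet> x = (norm x)^2" by (simp add: power2_norm_eq_inner)
    moreover have "norm x > 0" using False by simp
    ultimately show ?thesis by (simp add: divide_le_eq mult.commute)
  qed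
  have eq: "u \<bullet> (M *v u) = \<mu> * (u \<bullet> u)" using uu by (simp add: \<mu>_def)
  have "M *v u = \<mu> *\<^sub>R u" by (rule rayleigh_max_eigvec[OF sym le eq])
  thus ?thesis using uu le by blast
qed


lemma neg_mv: "(- M) *v x = - ((M::real^'m^'n) *v x)"
  by (simp add: matrix_vector_mult_def vec_eq_iff sum_negf)

lemma eig_finite:
  fixes M :: "real^'m^'m"
  assumes sym: "transpose M = M"
  shows "finite {c. is_eigenvalue M c}"
proof -
  let ?E = "{c. is_eigenvalue M c}"
  define g where "g c = (SOME v. v \<noteq> 0 \<and> M *v v = c *\<^sub>R v)" for c
  have g: "g c \<noteq> 0 \<and> M *v g c = c *\<^sub>R g c" if "c \<in> ?E" for c
  proof -
    have "\<exists>v. v \<noteq> 0 \<and> M *v v = c *\<^sub>R v" using that by (simp add: is_eigenvalue_def)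
    thus ?thesis unfolding g_def by (rule someI_ex)
  qed
  have orth: "g c \<bullet> g d = 0" if "c \<in> ?E" "d \<in> ?E" "c \<noteq> d" for c d
  proof -
    have "c * (g c \<bullet> g d) = (M *v g c) \<bullet> g d" using g[OF that(1)] by simp
    also have "\<dots> = g d \<bullet> (M *v g c)" by (simp add: inner_commute)
    also have "\<dots> = g c \<bullet> (M *v g d)" by (rule sym_dot[OF sym])
    also have "\<dots> = d * (g c \<bullet> g d)" using g[OF that(2)] by simp
    finally have "(c - d) * (g c \<bullet> g d) = 0" by (simp add: algebra_simps)
    thus ?thesis using that(3) by simp
  qed
  have inj: "inj_on g ?E"
  proof (rule inj_onI)
    fix c d assume c: "c \<in> ?E" and d: "d \<in> ?E" and e: "g c = g d"
    show "c = d"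
    proof (rule ccontr)
      assume "c \<noteq> d"
      hence "g c \<bullet> g c = 0" using orth[OF c d] e by simp
      thus False using g[OF c] by simp
    qed
  qed
  have "pairwise orthogonal (g ` ?E)"
    unfolding pairwise_def orthogonal_def using orth by auto
  moreover have "0 \<notin> g ` ?E" using g by auto
  ultimately have "independent (g ` ?E)" by (rule pairwise_orthogonal_independent)
  hence "finite (g ` ?E)" by (rule finiteI_independent)
  thus ?thesis using inj by (rule finite_imageD)
qed

lemma min_eig_props:
  fixes M :: "real^'m^'m"
  assumes sym: "transpose M = M"
  shows "is_eigenvalue M (min_eig M) \<and> (\<forall>x. min_eig M * (x \<bullet> x) \<le> x \<bullet> (M *v x))"
proof -
  have "transpose (- M) = - M" using sym by (simp add: transpose_neg')
  from rayleigh_max_exists[OF this] obtain u \<mu> where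
    uu: "u \<bullet> u = 1" and ev: "(- M) *v u = \<mu> *\<^sub>R u" and le: "\<forall>x. x \<bullet> ((- M) *v x) \<le> \<mu> * (x \<bullet> x)"
    by blast
  have u0: "u \<noteq> 0" using uu by auto
  have "M *v u = (- \<mu>) *\<^sub>R u" using ev by (simp add: neg_mv) (metis minus_minus scaleR_minus_left)
  hence e: "is_eigenvalue M (- \<mu>)" using u0 unfolding is_eigenvalue_def by blast
  have fin: "finite {c. is_eigenvalue M c}" by (rule eig_finite[OF sym])
  have ne: "{c. is_eigenvalue M c} \<noteq> {}" using e by blast
  have mem: "is_eigenvalue M (min_eig M)" unfolding min_eig_def using Min_in[OF fin ne] by simp
  have mle: "min_eig M \<le> - \<mu>" unfolding min_eig_def using Min_le[OF fin] e by simp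
  have "min_eig M * (x \<bullet> x) \<le> x \<bullet> (M *v x)" for x
  proof -
    have "x \<bullet> ((- M) *v x) = - (x \<bullet> (M *v x))" by (simp add: neg_mv)
    hence "- \<mu> * (x \<bullet> x) \<le> x \<bullet> (M *v x)" using le[rule_format, of x] by simp
    moreover have "min_eig M * (x \<bullet> x) \<le> - \<mu> * (x \<bullet> x)" using mle by (metis inner_ge_zero mult_right_mono)
    ultimately show ?thesis by linarith
  qed
  thus ?thesis using mem by blast
qed

lemma max_eig_props:
  fixes M :: "real^'m^'m"
  assumes sym: "transpose M = M"
  shows "\<forall>x. x \<bullet> (M *v x) \<le> max_eig M * (x \<bullet> x)"
proof -
  from rayleigh_max_exists[OF sym] obtain u \<mu> where
    uu: "u \<bullet> u = 1" and ev: "M *v u = \<mu> *\<^sub>R u" and le: "\<forall>x. x \<bullet> (M *v x) \<le> \<mu> * (x \<bullet> x)"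
    by blast
  have u0: "u \<noteq> 0" using uu by auto
  hence e: "is_eigenvalue M \<mu>" using ev unfolding is_eigenvalue_def by blast
  have fin: "finite {c. is_eigenvalue M c}" by (rule eig_finite[OF sym])
  have mle: "\<mu> \<le> max_eig M" unfolding max_eig_def using Max_ge[OF fin] e by simp
  show ?thesis
  proof
    fix x :: "real^'m"
    have "\<mu> * (x \<bullet> x) \<le> max_eig M * (x \<bullet> x)" using mle by (simp add: mult_right_mono)
    thus "x \<bullet> (M *v x) \<le> max_eig M * (x \<bullet> x)" using le by (meson order_trans)
  qed
qed


lemma Omega_entry: "(Omega :: real^('n::finite pidx)^('n pidx)) $ r $ s = (if s = (fst r, \<not> snd r) then (if snd r then -1 else 1) else 0)"
  by (cases r; cases s) (auto simp: Omega_def)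

lemma Omega_transpose: "transpose (Omega :: real^('n::finite pidx)^('n pidx)) = - Omega"
  by (auto simp: vec_eq_iff transpose_def Omega_entry)

lemma Omega_mv: "((Omega :: real^('n::finite pidx)^('n pidx)) *v x) $ r = (if snd r then - x $ (fst r, False) else x $ (fst r, True))"
proof -
  have "(Omega *v x) $ r = (\<Sum>s\<in>UNIV. (if s = (fst r, \<not> snd r) then (if snd r then -1 else 1) * x $ s else 0))"
    unfolding matrix_vector_mult_def vec_lambda_beta by (intro sum.cong) (auto simp: Omega_entry)
  also have "\<dots> = (if snd r then -1 else 1) * x $ (fst r, \<not> snd r)"
    by (simp add: sum.delta')
  finally show ?thesis by auto
qed

lemma Omega_norm: "((Omega :: real^('n::finite pidx)^('n pidx)) *v x) \<bullet> (Omega *v x) = x \<bullet> x"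
proof -
  define fl :: "'n pidx \<Rightarrow> 'n pidx" where "fl r = (fst r, \<not> snd r)" for r
  have bij: "bij fl" unfolding fl_def by (rule bij_betw_byWitness[where f'="\<lambda>r. (fst r, \<not> snd r)"]) auto
  have "(Omega *v x) \<bullet> (Omega *v x) = (\<Sum>r\<in>UNIV. (x $ fl r)^2)"
    unfolding inner_vec_def by (intro sum.cong) (auto simp: Omega_mv fl_def power2_eq_square)
  also have "\<dots> = (\<Sum>r\<in>UNIV. (x $ r)^2)"
    using sum.reindex_bij_betw[OF bij, of "\<lambda>r. (x $ r)^2"] by simp
  also have "\<dots> = x \<bullet> x" unfolding inner_vec_def by (simp add: power2_eq_square)
  finally show ?thesis .
qed

lemma Omega_T_norm: "(transpose (Omega :: real^('n::finite pidx)^('n pidx)) *v x) \<bullet> (transpose Omega *v x) = x \<bullet> x"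
  by (simp add: Omega_transpose neg_mv Omega_norm)

lemma qform_Re:
  fixes Sc :: "real^('n::finite pidx)^('n pidx)" and a b :: "real^('n pidx)"
  defines "z \<equiv> (\<chi> i. Complex (a $ i) (b $ i))"
  shows "Re (\<Sum>i\<in>UNIV. \<Sum>j\<in>UNIV. cnj (z $ i) * plus_iOmega Sc $ i $ j * z $ j)
       = a \<bullet> (Sc *v a) + b \<bullet> (Sc *v b) - a \<bullet> (Omega *v b) + b \<bullet> (Omega *v a)"
proof -
  have "Re (\<Sum>i\<in>UNIV. \<Sum>j\<in>UNIV. cnj (z $ i) * plus_iOmega Sc $ i $ j * z $ j)
     = (\<Sum>i\<in>UNIV. \<Sum>j\<in>UNIV. a$i * Sc$i$j * a$j + b$i * Sc$i$j * b$j - a$i * Omega$i$j * b$j + b$i * Omega$i$j * a$j)"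
    by (simp add: Re_sum z_def plus_iOmega_def algebra_simps)
  also have "\<dots> = a \<bullet> (Sc *v a) + b \<bullet> (Sc *v b) - a \<bullet> (Omega *v b) + b \<bullet> (Omega *v a)"
    by (simp add: inner_vec_def matrix_vector_mult_def sum_distrib_left sum.distrib sum_subtractf mult.assoc)
  finally show ?thesis .
qed


lemma diffusion_sym: "transpose (diffusion C) = diffusion (C :: complex^('n::finite pidx)^('l::finite))"
proof -
  let ?R = "(\<chi> i j. Re (CdagC C $ i $ j)) :: real^('n pidx)^('n pidx)"
  have R: "transpose ?R = ?R"
    by (simp add: vec_eq_iff transpose_def CdagC_def Re_sum algebra_simps)
  show ?thesis unfolding diffusion_def
    by (simp add: transpose_scalar matrix_transpose_mul R matrix_mul_assoc)
qed

theorem proposition1: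
  fixes H :: "real^('n::finite pidx)^('n pidx)"
    and C :: "complex^('n pidx)^('l::finite)"
    and S :: "real^('n pidx)^('n pidx)"
  assumes "transpose H = H"
    and "negdef (drift H C + transpose (drift H C))"
    and "achievable_cm (drift H C) (diffusion C) S"
  shows "min_eig S \<ge> min_eig (- (drift H C + transpose (drift H C))) / max_eig (diffusion C)"
proof -
  define A where "A = drift H C"
  define D where "D = diffusion C"
  define N where "N = - (A + transpose A)"
  obtain Sc M0 where Sc_sym: "transpose Sc = Sc" and cp: "cpsd (plus_iOmega Sc)"
    and ps: "psd (A ** Sc + Sc ** transpose A + D)" and M0s: "transpose M0 = M0" and M0p: "psd M0"
    and SS: "S = Sc + M0"
    using assms(3) unfolding achievable_cm_def conditional_cm_def A_def D_def by blast
  from rayleigh_max_exists[OF Sc_sym] obtain u \<mu> where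
    uu: "u \<bullet> u = 1" and ev: "Sc *v u = \<mu> *\<^sub>R u" and le: "\<forall>x. x \<bullet> (Sc *v x) \<le> \<mu> * (x \<bullet> x)"
    by blast
  have unc: "2 * t * (a \<bullet> a) \<le> a \<bullet> (Sc *v a) + t^2 * \<mu> * (a \<bullet> a)" for a :: "real^('n pidx)" and t :: real
  proof -
    define w where "w = transpose Omega *v a"
    define b where "b = t *\<^sub>R w"
    have q: "0 \<le> a \<bullet> (Sc *v a) + b \<bullet> (Sc *v b) - a \<bullet> (Omega *v b) + b \<bullet> (Omega *v a)"
      using cp[unfolded cpsd_def, rule_format, of "\<chi> i. Complex (a $ i) (b $ i)"] qform_Re[of a b Sc]
      by (simp add: Let_def)
    have ww: "w \<bullet> w = a \<bullet> a" unfolding w_def by (rule Omega_T_norm)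
    have e1: "a \<bullet> (Omega *v b) = t * (w \<bullet> w)"
      unfolding b_def by (simp add: matrix_vector_mult_scaleR dot_sym[of a Omega] w_def)
    have Oa: "Omega *v a = - w" unfolding w_def by (simp add: Omega_transpose neg_mv)
    have e2: "b \<bullet> (Omega *v a) = - t * (w \<bullet> w)" unfolding b_def Oa by simp
    have e3: "b \<bullet> (Sc *v b) = t^2 * (w \<bullet> (Sc *v w))"
      unfolding b_def by (simp add: matrix_vector_mult_scaleR power2_eq_square)
    have "w \<bullet> (Sc *v w) \<le> \<mu> * (w \<bullet> w)" using le by blast
    hence "t^2 * (w \<bullet> (Sc *v w)) \<le> t^2 * (\<mu> * (w \<bullet> w))" by (simp add: mult_left_mono)
    with q e1 e2 e3 ww show ?thesis by (simp add: algebra_simps)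
  qed
  have uSu: "u \<bullet> (Sc *v u) = \<mu>" using ev uu by simp
  have mu1: "\<mu> \<ge> 1" using unc[of 1 u] uu uSu by simp
  have lowb: "(1/\<mu>) * (x \<bullet> x) \<le> x \<bullet> (Sc *v x)" for x
  proof -
    have "2 * (1/\<mu>) * (x \<bullet> x) \<le> x \<bullet> (Sc *v x) + (1/\<mu>)^2 * \<mu> * (x \<bullet> x)" by (rule unc)
    moreover have "(1/\<mu>)^2 * \<mu> * (x \<bullet> x) = (1/\<mu>) * (x \<bullet> x)" using mu1 by (simp add: power2_eq_square)
    ultimately show ?thesis by linarith
  qed
  have "0 \<le> u \<bullet> ((A ** Sc + Sc ** transpose A + D) *v u)" using ps unfolding psd_def by blast
  also have "\<dots> = u \<bullet> (A *v (Sc *v u)) + u \<bullet> (Sc *v (transpose A *v u)) + u \<bullet> (D *v u)"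
    by (simp add: matrix_vector_mult_add_rdistrib matrix_vector_mul_assoc[symmetric] inner_add_right del: transpose_matrix_vector)
  also have "u \<bullet> (Sc *v (transpose A *v u)) = (Sc *v u) \<bullet> (transpose A *v u)"
    using dot_sym[of u Sc] Sc_sym by simp
  finally have st: "0 \<le> \<mu> * (u \<bullet> (A *v u) + u \<bullet> (transpose A *v u)) + u \<bullet> (D *v u)"
    using ev by (simp add: matrix_vector_mult_scaleR algebra_simps)
  have uNu: "u \<bullet> (N *v u) = - (u \<bullet> (A *v u) + u \<bullet> (transpose A *v u))"
    unfolding N_def by (simp only: neg_mv matrix_vector_mult_add_rdistrib inner_add_right inner_minus_right)
  have u0: "u \<noteq> 0" using uu by auto
  have "u \<bullet> ((A + transpose A) *v u) < 0" using assms(2) u0 unfolding negdef_def A_def by blast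
  hence pos: "u \<bullet> (N *v u) > 0" unfolding N_def by (simp only: neg_mv inner_minus_right)
  have muN: "\<mu> * (u \<bullet> (N *v u)) \<le> u \<bullet> (D *v u)" 
  proof -
    have "\<mu> * (u \<bullet> (N *v u)) = - (\<mu> * (u \<bullet> (A *v u) + u \<bullet> (transpose A *v u)))"
      by (simp only: uNu mult_minus_right)
    thus ?thesis using st by linarith
  qed
  have Nsym: "transpose N = N" unfolding N_def by (simp add: vec_eq_iff transpose_def)
  have Dsym: "transpose D = D" unfolding D_def by (rule diffusion_sym)
  have alpha: "min_eig N \<le> u \<bullet> (N *v u)" using min_eig_props[OF Nsym] uu by (metis mult_1_right mult.commute)
  have delta: "u \<bullet> (D *v u) \<le> max_eig D" using max_eig_props[OF Dsym] uu by (metis mult_1_right)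
  have dpos: "max_eig D > 0"
  proof -
    have "0 < \<mu> * (u \<bullet> (N *v u))" using mu1 pos by simp
    thus ?thesis using muN delta by linarith
  qed
  have ratio: "min_eig N / max_eig D \<le> 1 / \<mu>"
  proof -
    have "min_eig N * \<mu> \<le> u \<bullet> (N *v u) * \<mu>" using alpha mu1 by (simp add: mult_right_mono)
    also have "\<dots> \<le> max_eig D" using muN delta by (simp add: mult.commute)
    finally have "min_eig N * \<mu> \<le> max_eig D" .
    thus ?thesis using dpos mu1 by (simp add: divide_le_eq field_simps)
  qed
  have Ssym: "transpose S = S" unfolding SS by (simp add: transpose_add' Sc_sym M0s)
  obtain x where x0: "x \<noteq> 0" and xe: "S *v x = min_eig S *\<^sub>R x"
    using min_eig_props[OF Ssym] unfolding is_eigenvalue_def by blast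
  have "min_eig S * (x \<bullet> x) = x \<bullet> (S *v x)" using xe by simp
  also have "\<dots> = x \<bullet> (Sc *v x) + x \<bullet> (M0 *v x)" unfolding SS by (simp add: matrix_vector_mult_add_rdistrib inner_add_right)
  also have "\<dots> \<ge> (1/\<mu>) * (x \<bullet> x)" using lowb[of x] M0p unfolding psd_def by (meson add_increasing2)
  finally have "(1/\<mu>) * (x \<bullet> x) \<le> min_eig S * (x \<bullet> x)" .
  moreover have "x \<bullet> x > 0" using x0 by simp
  ultimately have "1/\<mu> \<le> min_eig S" by (metis mult_right_le_imp_le)
  with ratio show ?thesis unfolding N_def A_def D_def by linarith
qed

end
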